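(* Let $\Lambda$ be a finite-dimensional algebra over a field $k$. Then: (1) $K({\bf T}(\Lambda))=K(\Lambda) \ltimes [\Lambda,\Lambda^*]$, i.e. $K({\bf T}(\Lambda))=\{(a,\varphi): a\in K(\Lambda),\ \varphi\in[\Lambda,\Lambda^*]\}$. (2) Assume moreover that $\Lambda$ is symmetric with symmetrizing (associative, symmetric, nondegenerate bilinear) form $\langle-,-\rangle$. Then (a) $[\Lambda,\Lambda^*]$ is spanned by the linear maps $\varphi_{[a,b]}:=\langle -,ab-ba\rangle$, $a,b\in\Lambda$; (b) $[\Lambda,\Lambda^*] = \operatorname{Ann}_{\Lambda^*}(Z(\Lambda))$.
   Context: $\Lambda^*=\operatorname{Hom}_k(\Lambda,k)$ is a $\Lambda$-$\Lambda$-bimodule via $(a\varphi)(b)=\varphi(ba)$, $(\varphi a)(b)=\varphi(ab)$. The trivial extension ${\bf T}(\Lambda)$ is $\Lambda\oplus\Lambda^*$ with multiplication $(a,\varphi)(b,\psi)=(ab,a\psi+\varphi b)$. For an algebra $A$, $K(A)$ is the $k$-span of all commutators $xy-yx$. $[\Lambda,\Lambda^*]$ is the $k$-span of all $a\varphi-\varphi a$ with $a\in\Lambda$, $\varphi\in\Lambda^*$. $Z(\Lambda)$ is the center, and $\operatorname{Ann}_{\Lambda^*}(V)=\{\varphi\in\Lambda^*:\varphi(V)=0\}$ for $V\subseteq\Lambda$. *)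

theory Defs
  imports Complex_Main "HOL-Library.Function_Algebras" "HOL-Library.Product_Plus"
begin

definition fd_algebra :: "('k::field \<Rightarrow> 'a::ring_1 \<Rightarrow> 'a) \<Rightarrow> bool" where
  "fd_algebra scale \<longleftrightarrow> vector_space scale
     \<and> (\<forall>c x y. scale c (x * y) = scale c x * y \<and> scale c (x * y) = x * scale c y)
     \<and> (\<exists>B. finite B \<and> module.span scale B = UNIV)"

definition dual :: "('k::field \<Rightarrow> 'a::ring_1 \<Rightarrow> 'a) \<Rightarrow> ('a \<Rightarrow> 'k) set" where
  "dual scale = {\<phi>. Vector_Spaces.linear scale (*) \<phi>}"

definition dscale :: "'k::field \<Rightarrow> ('a \<Rightarrow> 'k) \<Rightarrow> ('a \<Rightarrow> 'k)" where
  "dscale c \<phi> = (\<lambda>x. c * \<phi> x)"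

definition lact :: "'a::ring_1 \<Rightarrow> ('a \<Rightarrow> 'k) \<Rightarrow> ('a \<Rightarrow> 'k)" where
  "lact a \<phi> = (\<lambda>b. \<phi> (b * a))"

definition ract :: "('a \<Rightarrow> 'k) \<Rightarrow> 'a::ring_1 \<Rightarrow> ('a \<Rightarrow> 'k)" where
  "ract \<phi> a = (\<lambda>b. \<phi> (a * b))"

definition triv_ext :: "('k::field \<Rightarrow> 'a::ring_1 \<Rightarrow> 'a) \<Rightarrow> ('a \<times> ('a \<Rightarrow> 'k)) set" where
  "triv_ext scale = {(a, \<phi>). \<phi> \<in> dual scale}"

definition tscale :: "('k::field \<Rightarrow> 'a \<Rightarrow> 'a) \<Rightarrow> 'k \<Rightarrow> 'a \<times> ('a \<Rightarrow> 'k) \<Rightarrow> 'a \<times> ('a \<Rightarrow> 'k)" where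
  "tscale scale c p = (scale c (fst p), dscale c (snd p))"

definition tmult :: "'a::ring_1 \<times> ('a \<Rightarrow> 'k::field) \<Rightarrow> 'a \<times> ('a \<Rightarrow> 'k) \<Rightarrow> 'a \<times> ('a \<Rightarrow> 'k)" where
  "tmult p q = (fst p * fst q, lact (fst p) (snd q) + ract (snd p) (fst q))"

definition Kcomm :: "('k::field \<Rightarrow> 'a::ring_1 \<Rightarrow> 'a) \<Rightarrow> 'a set" where
  "Kcomm scale = module.span scale {x * y - y * x | x y. True}"

definition Kcomm_triv :: "('k::field \<Rightarrow> 'a::ring_1 \<Rightarrow> 'a) \<Rightarrow> ('a \<times> ('a \<Rightarrow> 'k)) set" where
  "Kcomm_triv scale = module.span (tscale scale)
     {tmult x y - tmult y x | x y. x \<in> triv_ext scale \<and> y \<in> triv_ext scale}"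

definition comm_dual :: "('k::field \<Rightarrow> 'a::ring_1 \<Rightarrow> 'a) \<Rightarrow> ('a \<Rightarrow> 'k) set" where
  "comm_dual scale = module.span dscale
     {lact a \<phi> - ract \<phi> a | a \<phi>. \<phi> \<in> dual scale}"

definition center :: "'a::ring_1 set" where
  "center = {z. \<forall>x. z * x = x * z}"

definition Ann_dual :: "('k::field \<Rightarrow> 'a::ring_1 \<Rightarrow> 'a) \<Rightarrow> 'a set \<Rightarrow> ('a \<Rightarrow> 'k) set" where
  "Ann_dual scale V = {\<phi> \<in> dual scale. \<forall>v\<in>V. \<phi> v = 0}"

definition symmetrizing_form :: "('k::field \<Rightarrow> 'a::ring_1 \<Rightarrow> 'a) \<Rightarrow> ('a \<Rightarrow> 'a \<Rightarrow> 'k) \<Rightarrow> bool" where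
  "symmetrizing_form scale B \<longleftrightarrow>
     (\<forall>a. Vector_Spaces.linear scale (*) (\<lambda>x. B x a))
   \<and> (\<forall>a. Vector_Spaces.linear scale (*) (\<lambda>x. B a x))
   \<and> (\<forall>a b c. B (a * b) c = B a (b * c))
   \<and> (\<forall>a b. B a b = B b a)
   \<and> (\<forall>a. (\<forall>b. B a b = 0) \<longrightarrow> a = 0)"

end

theory Submission
  imports Defs
begin

lemma lin_add:
  "Vector_Spaces.linear s ((*) :: 'k::field \<Rightarrow> 'k \<Rightarrow> 'k) f \<Longrightarrow> f (x + y) = f x + f y"
  by (simp add: Vector_Spaces.linear_iff)

lemma lin_scale:
  "Vector_Spaces.linear s ((*) :: 'k::field \<Rightarrow> 'k \<Rightarrow> 'k) f \<Longrightarrow> f (s c x) = c * f x"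
  by (simp add: Vector_Spaces.linear_iff)

lemma lin_diff:
  assumes "Vector_Spaces.linear s ((*) :: 'k::field \<Rightarrow> 'k \<Rightarrow> 'k) f"
  shows "f (x - y) = f x - f y"
proof -
  have "f x = f (x - y) + f y" using lin_add[OF assms, of "x - y" y] by simp
  then show ?thesis by simp
qed

lemma vs_self: "vector_space ((*) :: 'k::field \<Rightarrow> 'k \<Rightarrow> 'k)"
  by unfold_locales (auto simp: algebra_simps)

lemma module_dscale: "module (dscale :: 'k::field \<Rightarrow> ('a \<Rightarrow> 'k) \<Rightarrow> ('a \<Rightarrow> 'k))"
  by unfold_locales (auto simp: dscale_def fun_eq_iff algebra_simps)

lemma module_tscale:
  fixes scale :: "'k::field \<Rightarrow> 'a::ring_1 \<Rightarrow> 'a"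
  assumes "vector_space scale"
  shows "module (tscale scale :: 'k \<Rightarrow> 'a \<times> ('a \<Rightarrow> 'k) \<Rightarrow> _)"
proof -
  interpret V: vector_space scale by fact
  show ?thesis
    by unfold_locales (auto simp: tscale_def dscale_def fun_eq_iff algebra_simps
        V.scale_right_distrib V.scale_left_distrib)
qed

lemma lin_comb:
  fixes scale :: "'k::field \<Rightarrow> 'a::ring_1 \<Rightarrow> 'a"
  assumes "vector_space scale" "Vector_Spaces.linear scale (*) f" "Vector_Spaces.linear scale (*) g"
  shows "Vector_Spaces.linear scale (*) (\<lambda>x. c * f x + g x)"
  using assms vs_self by (auto simp: Vector_Spaces.linear_iff algebra_simps)

lemma zero_dual:
  fixes scale :: "'k::field \<Rightarrow> 'a::ring_1 \<Rightarrow> 'a"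
  assumes "vector_space scale"
  shows "(0 :: 'a \<Rightarrow> 'k) \<in> dual scale"
  using assms vs_self by (auto simp: dual_def Vector_Spaces.linear_iff)

lemma key:
  fixes scale :: "'k::field \<Rightarrow> 'a::ring_1 \<Rightarrow> 'a"
  assumes VS: "vector_space scale" and fin: "finite F"
  shows "(\<forall>f\<in>F. Vector_Spaces.linear scale (*) f) \<Longrightarrow> Vector_Spaces.linear scale (*) \<psi> \<Longrightarrow>
     (\<forall>x. (\<forall>f\<in>F. f x = 0) \<longrightarrow> \<psi> x = 0) \<Longrightarrow> \<psi> \<in> module.span dscale F"
  using fin
proof (induction F arbitrary: \<psi> rule: finite_induct)
  case empty
  then have "\<psi> = 0" by (auto simp: fun_eq_iff)
  then show ?case using module.span_zero[OF module_dscale, of "{}"] by (simp add: zero_fun_def)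
next
  case (insert g F)
  have lg: "Vector_Spaces.linear scale (*) g" using insert by auto
  show ?case
  proof (cases "\<forall>x. (\<forall>f\<in>F. f x = 0) \<longrightarrow> g x = 0")
    case True
    then have "\<psi> \<in> module.span dscale F" using insert.IH[of \<psi>] insert.prems by auto
    then show ?thesis using module.span_mono[OF module_dscale, of F "insert g F"] by auto
  next
    case False
    then obtain v where v: "\<forall>f\<in>F. f v = 0" "g v \<noteq> 0" by auto
    define \<psi>' where "\<psi>' = (\<lambda>x. (- (\<psi> v / g v)) * g x + \<psi> x)"
    have l': "Vector_Spaces.linear scale (*) \<psi>'"
      unfolding \<psi>'_def by (rule lin_comb[OF VS lg insert.prems(2)])
    have "\<psi>' x = 0" if x: "\<forall>f\<in>F. f x = 0" for x
    proof -
      define y where "y = x - scale (g x / g v) v"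
      have "f y = 0" if "f \<in> F" for f
      proof -
        have lf: "Vector_Spaces.linear scale (*) f" using insert.prems that by auto
        have "f x = 0" "f v = 0" using x v that by auto
        then show ?thesis unfolding y_def using lin_diff[OF lf] lin_scale[OF lf] by simp
      qed
      moreover have "g y = 0" unfolding y_def using lin_diff[OF lg] lin_scale[OF lg] v by simp
      ultimately have "\<psi> y = 0" using insert.prems(3) by auto
      then have "\<psi> x = (g x / g v) * \<psi> v" unfolding y_def
        using lin_diff[OF insert.prems(2)] lin_scale[OF insert.prems(2)] by simp
      then show ?thesis unfolding \<psi>'_def using v by (simp add: field_simps)
    qed
    then have "\<psi>' \<in> module.span dscale F" using insert.IH[of \<psi>'] insert.prems l' by auto
    then have "\<psi>' \<in> module.span dscale (insert g F)"
      using module.span_mono[OF module_dscale, of F "insert g F"] by auto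
    moreover have "g \<in> module.span dscale (insert g F)"
      by (rule module.span_base[OF module_dscale]) simp
    ultimately have "dscale (\<psi> v / g v) g + \<psi>' \<in> module.span dscale (insert g F)"
      using module.span_add[OF module_dscale] module.span_scale[OF module_dscale] by blast
    moreover have "dscale (\<psi> v / g v) g + \<psi>' = \<psi>"
      unfolding \<psi>'_def dscale_def by (auto simp: fun_eq_iff)
    ultimately show ?thesis by simp
  qed
qed


lemma part1:
  fixes scale :: "'k::field \<Rightarrow> 'a::ring_1 \<Rightarrow> 'a"
  assumes VS: "vector_space scale"
  shows "Kcomm_triv scale = {(a, \<phi>). a \<in> Kcomm scale \<and> \<phi> \<in> comm_dual scale}"
proof -
  interpret V: vector_space scale by fact
  interpret D: module "dscale :: 'k \<Rightarrow> ('a \<Rightarrow> 'k) \<Rightarrow> _" by (rule module_dscale)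
  interpret T: module "tscale scale :: 'k \<Rightarrow> 'a \<times> ('a \<Rightarrow> 'k) \<Rightarrow> _" by (rule module_tscale[OF VS])
  let ?G = "{tmult x y - tmult y x | x y. x \<in> triv_ext scale \<and> y \<in> triv_ext scale}"
  let ?S = "{(a, \<phi>). a \<in> Kcomm scale \<and> \<phi> \<in> comm_dual scale}"
  have GS: "p \<in> ?S" if "p \<in> ?G" for p
  proof -
    obtain a \<phi> b \<psi> where p: "p = tmult (a, \<phi>) (b, \<psi>) - tmult (b, \<psi>) (a, \<phi>)"
      and d: "\<phi> \<in> dual scale" "\<psi> \<in> dual scale"
      using \<open>p \<in> ?G\<close> unfolding triv_ext_def by auto
    have "a * b - b * a \<in> Kcomm scale" unfolding Kcomm_def by (rule V.span_base) auto
    moreover have "lact a \<psi> - ract \<psi> a \<in> comm_dual scale" unfolding comm_dual_def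
      by (rule D.span_base) (use d in auto)
    moreover have "lact b \<phi> - ract \<phi> b \<in> comm_dual scale" unfolding comm_dual_def
      by (rule D.span_base) (use d in auto)
    ultimately have "(lact a \<psi> - ract \<psi> a) - (lact b \<phi> - ract \<phi> b) \<in> comm_dual scale"
      "a * b - b * a \<in> Kcomm scale"
      unfolding comm_dual_def using D.span_diff by auto
    moreover have "snd p = (lact a \<psi> - ract \<psi> a) - (lact b \<phi> - ract \<phi> b)"
      "fst p = a * b - b * a"
      unfolding p tmult_def by (auto simp: algebra_simps)
    ultimately show ?thesis by (cases p) auto
  qed
  have sub: "Kcomm_triv scale \<subseteq> ?S"
  proof
    fix p assume "p \<in> Kcomm_triv scale"
    then have "p \<in> T.span ?G" unfolding Kcomm_triv_def .
    then show "p \<in> ?S"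
    proof (induction rule: T.span_induct_alt)
      case base
      then show ?case unfolding Kcomm_def comm_dual_def zero_prod_def
        using V.span_zero D.span_zero by auto
    next
      case (step c x y)
      have "x \<in> ?S" using GS step by auto
      then show ?case using step.IH unfolding tscale_def Kcomm_def comm_dual_def
        by (auto intro!: V.span_add V.span_scale D.span_add D.span_scale)
    qed
  qed
  have z: "(0 :: 'a \<Rightarrow> 'k) \<in> dual scale" by (rule zero_dual[OF VS])
  have a0: "(a, 0) \<in> Kcomm_triv scale" if "a \<in> Kcomm scale" for a
  proof -
    from that have "a \<in> V.span {x * y - y * x | x y. True}" unfolding Kcomm_def .
    then show ?thesis
    proof (induction rule: V.span_induct_alt)
      case base
      then show ?case unfolding Kcomm_triv_def using T.span_zero by (simp add: zero_prod_def zero_fun_def)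
    next
      case (step c x y)
      then obtain p q where x: "x = p * q - q * p" by auto
      have "(x, 0) = tmult (p, 0) (q, 0) - tmult (q, 0) (p, 0)"
        unfolding x tmult_def lact_def ract_def by (simp add: zero_fun_def)
      then have "(x, 0) \<in> ?G" using z unfolding triv_ext_def by blast
      then have "(x, (0 :: 'a \<Rightarrow> 'k)) \<in> Kcomm_triv scale" unfolding Kcomm_triv_def by (rule T.span_base)
      then have "tscale scale c (x, 0) + (y, 0) \<in> Kcomm_triv scale"
        using step.IH unfolding Kcomm_triv_def by (intro T.span_add T.span_scale)
      moreover have "tscale scale c (x, (0 :: 'a \<Rightarrow> 'k)) + (y, 0) = (scale c x + y, 0)"
        unfolding tscale_def dscale_def by (simp add: zero_fun_def)
      ultimately show ?case by (simp add: zero_fun_def)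
    qed
  qed
  have b0: "(0, \<phi>) \<in> Kcomm_triv scale" if "\<phi> \<in> comm_dual scale" for \<phi>
  proof -
    from that have "\<phi> \<in> D.span {lact a \<phi> - ract \<phi> a | a \<phi>. \<phi> \<in> dual scale}" unfolding comm_dual_def .
    then show ?thesis
    proof (induction rule: D.span_induct_alt)
      case base
      have "(0::'a \<times> ('a \<Rightarrow> 'k)) \<in> T.span ?G" by (rule T.span_zero)
      then show ?case unfolding Kcomm_triv_def by (simp add: zero_prod_def zero_fun_def)
    next
      case (step c x y)
      then obtain a \<psi> where x: "x = lact a \<psi> - ract \<psi> a" and d: "\<psi> \<in> dual scale" by auto
      have "(0, x) = tmult (a, 0) (0, \<psi>) - tmult (0, \<psi>) (a, 0)"
        unfolding x tmult_def lact_def ract_def by (simp add: zero_fun_def)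
      then have "(0, x) \<in> ?G" using z d unfolding triv_ext_def by blast
      then have "(0, x) \<in> Kcomm_triv scale" unfolding Kcomm_triv_def by (rule T.span_base)
      then have "tscale scale c (0, x) + (0, y) \<in> Kcomm_triv scale"
        using step.IH unfolding Kcomm_triv_def by (intro T.span_add T.span_scale)
      moreover have "tscale scale c (0, x) + (0, y) = (0, dscale c x + y)"
        unfolding tscale_def by simp
      ultimately show ?case by (simp add: plus_fun_def)
    qed
  qed
  have "?S \<subseteq> Kcomm_triv scale"
  proof
    fix p assume "p \<in> ?S"
    then obtain a \<phi> where p: "p = (a, \<phi>)" "a \<in> Kcomm scale" "\<phi> \<in> comm_dual scale" by auto
    have "(a, 0) + (0, \<phi>) \<in> Kcomm_triv scale"
      unfolding Kcomm_triv_def using a0[OF p(2)] b0[OF p(3)] unfolding Kcomm_triv_def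
      by (rule T.span_add)
    then show "p \<in> Kcomm_triv scale" using p by simp
  qed
  with sub show ?thesis by blast
qed


lemma part2:
  fixes scale :: "'k::field \<Rightarrow> 'a::ring_1 \<Rightarrow> 'a" and Bf :: "'a \<Rightarrow> 'a \<Rightarrow> 'k"
  assumes VS: "vector_space scale"
    and MC: "\<forall>c x y. scale c (x * y) = scale c x * y \<and> scale c (x * y) = x * scale c y"
    and finB: "finite Bs" and spB: "module.span scale Bs = UNIV"
    and SF: "symmetrizing_form scale Bf"
  shows "comm_dual scale = module.span dscale {(\<lambda>x. Bf x (a * b - b * a)) | a b. True}
         \<and> comm_dual scale = Ann_dual scale center"
proof -
  interpret V: vector_space scale by fact
  interpret D: module "dscale :: 'k \<Rightarrow> ('a \<Rightarrow> 'k) \<Rightarrow> _" by (rule module_dscale)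
  have lin1: "Vector_Spaces.linear scale (*) (\<lambda>x. Bf x a)" for a using SF unfolding symmetrizing_form_def by blast
  have lin2: "Vector_Spaces.linear scale (*) (\<lambda>x. Bf a x)" for a using SF unfolding symmetrizing_form_def by blast
  have asc: "Bf (a * b) c = Bf a (b * c)" for a b c using SF unfolding symmetrizing_form_def by blast
  have sym: "Bf a b = Bf b a" for a b using SF unfolding symmetrizing_form_def by blast
  have nd: "(\<forall>b. Bf a b = 0) \<Longrightarrow> a = 0" for a using SF unfolding symmetrizing_form_def by blast
  have m1: "scale c x * y = scale c (x * y)" "x * scale c y = scale c (x * y)" for c x y
    using MC by metis+
  have d1: "Bf (u - v) b = Bf u b - Bf v b" for u v b using lin_diff[OF lin1[of b]] by simp
  have d2: "Bf x (u - v) = Bf x u - Bf x v" for u v x using lin_diff[OF lin2[of x]] by simp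
  have I: "Bf x (a * b - b * a) = Bf (x * a - a * x) b" for x a b
  proof -
    have "Bf x (b * a) = Bf (a * x) b"
      by (metis asc sym)
    then show ?thesis by (simp add: d1 d2 asc)
  qed
  let ?CG = "{lact a \<phi> - ract \<phi> a | a \<phi>. \<phi> \<in> dual scale}"
  let ?Gen = "{(\<lambda>x. Bf x (a * b - b * a)) | a b. True}"
  have c1: "?Gen \<subseteq> ?CG"
  proof
    fix f assume "f \<in> ?Gen"
    then obtain a b where f: "f = (\<lambda>x. Bf x (a * b - b * a))" by auto
    have "f = lact a (\<lambda>x. Bf x b) - ract (\<lambda>x. Bf x b) a"
      unfolding f lact_def ract_def by (auto simp: fun_eq_iff I d1)
    moreover have "(\<lambda>x. Bf x b) \<in> dual scale" unfolding dual_def using lin1 by auto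
    ultimately show "f \<in> ?CG" by blast
  qed
  have c2: "comm_dual scale \<subseteq> Ann_dual scale center"
  proof
    fix \<phi> assume "\<phi> \<in> comm_dual scale"
    then have "\<phi> \<in> D.span ?CG" unfolding comm_dual_def .
    then have "\<phi> \<in> dual scale \<and> (\<forall>z\<in>center. \<phi> z = 0)"
    proof (induction rule: D.span_induct_alt)
      case base
      then show ?case using zero_dual[OF VS] by (auto simp: zero_fun_def)
    next
      case (step c x y)
      then obtain a \<psi> where x: "x = lact a \<psi> - ract \<psi> a" and d: "\<psi> \<in> dual scale" by auto
      have l\<psi>: "Vector_Spaces.linear scale (*) \<psi>" using d unfolding dual_def by auto
      have xe: "x = (\<lambda>b. \<psi> (b * a) - \<psi> (a * b))" unfolding x lact_def ract_def by auto
      have lx: "Vector_Spaces.linear scale (*) x"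
        unfolding xe Vector_Spaces.linear_iff using VS vs_self MC
        by (auto simp: distrib_left distrib_right lin_add[OF l\<psi>] lin_scale[OF l\<psi>] m1 algebra_simps)
      have "Vector_Spaces.linear scale (*) (\<lambda>b. c * x b + y b)"
        by (rule lin_comb[OF VS lx]) (use step.IH in \<open>auto simp: dual_def\<close>)
      moreover have "dscale c x + y = (\<lambda>b. c * x b + y b)" by (auto simp: dscale_def)
      moreover have "x z = 0" if "z \<in> center" for z
        using that unfolding xe center_def by auto
      ultimately show ?case using step.IH by (auto simp: dual_def dscale_def)
    qed
    then show "\<phi> \<in> Ann_dual scale center" unfolding Ann_dual_def by auto
  qed
  let ?GB = "(\<lambda>(a, b). (\<lambda>x. Bf x (a * b - b * a))) ` (Bs \<times> Bs)"
  have c3: "Ann_dual scale center \<subseteq> D.span ?GB"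
  proof
    fix \<phi> assume \<phi>: "\<phi> \<in> Ann_dual scale center"
    show "\<phi> \<in> D.span ?GB"
    proof (rule key[OF VS])
      show "finite ?GB" using finB by auto
      show "\<forall>f\<in>?GB. Vector_Spaces.linear scale (*) f" using lin1 by auto
      show "Vector_Spaces.linear scale (*) \<phi>" using \<phi> unfolding Ann_dual_def dual_def by auto
      show "\<forall>x. (\<forall>f\<in>?GB. f x = 0) \<longrightarrow> \<phi> x = 0"
      proof (intro allI impI)
        fix x assume h: "\<forall>f\<in>?GB. f x = 0"
        have ab: "x * a - a * x = 0" if a: "a \<in> Bs" for a
        proof (rule nd, rule allI)
          fix b
          have "b \<in> V.span Bs" using spB by auto
          then show "Bf (x * a - a * x) b = 0"
          proof (induction rule: V.span_induct_alt)
            case base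
            then show ?case using lin_scale[OF lin2, of _ 0 0] by simp
          next
            case (step c u y)
            have "Bf (x * a - a * x) u = 0" using h a step(1) I[of x a u] by force
            then show ?case using step.IH lin_add[OF lin2] lin_scale[OF lin2] by simp
          qed
        qed
        have "x * y - y * x = 0" for y
        proof -
          have "y \<in> V.span Bs" using spB by auto
          then show ?thesis
          proof (induction rule: V.span_induct_alt)
            case base
            then show ?case by simp
          next
            case (step c u v)
            have "x * (scale c u + v) - (scale c u + v) * x = scale c (x * u - u * x) + (x * v - v * x)"
              by (simp add: m1 algebra_simps V.scale_right_diff_distrib)
            then show ?case using ab[OF step(1)] step.IH by simp
          qed
        qed
        then have "x \<in> center" unfolding center_def by auto
        then show "\<phi> x = 0" using \<phi> unfolding Ann_dual_def by auto
      qed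
    qed
  qed
  have "D.span ?GB \<subseteq> D.span ?Gen" by (rule D.span_mono) auto
  moreover have "D.span ?Gen \<subseteq> comm_dual scale" unfolding comm_dual_def by (rule D.span_mono[OF c1])
  ultimately have "comm_dual scale = Ann_dual scale center" "Ann_dual scale center = D.span ?Gen"
    using c2 c3 by auto
  then show ?thesis by simp
qed

theorem lemma3p4:
  fixes scale :: "'k::field \<Rightarrow> 'a::ring_1 \<Rightarrow> 'a"
  assumes "fd_algebra scale"
  shows "Kcomm_triv scale = {(a, \<phi>). a \<in> Kcomm scale \<and> \<phi> \<in> comm_dual scale}
       \<and> (\<forall>B. symmetrizing_form scale B \<longrightarrow>
           comm_dual scale = module.span dscale {(\<lambda>x. B x (a * b - b * a)) | a b. True}
         \<and> comm_dual scale = Ann_dual scale center)"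
proof -
  have VS: "vector_space scale" and MC: "\<forall>c x y. scale c (x * y) = scale c x * y \<and> scale c (x * y) = x * scale c y"
    and fb: "\<exists>Bs. finite Bs \<and> module.span scale Bs = UNIV"
    using assms unfolding fd_algebra_def by blast+
  from fb obtain Bs where "finite Bs" "module.span scale Bs = UNIV" by blast
  show ?thesis using part1[OF VS] part2[OF VS MC \<open>finite Bs\<close> \<open>module.span scale Bs = UNIV\<close>] by blast
qed

end
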